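(* Let $R$ be an excellent normal two-dimensional local ring, $\phi:X\to\operatorname{Spec}(R)$ a resolution of singularities, and $D_1\le D_2$ effective divisors on $X$ with exceptional support, with respective anti-nef parts of their Zariski decompositions $\Delta_1$ and $\Delta_2$. Then $(\Delta_2^2)\le(\Delta_1^2)$, with equality if and only if $\Delta_1=\Delta_2$.
   Context: The intersection form on exceptional curves of $X$ is negative definite. A $\mathbb Q$-divisor $C$ with exceptional support is anti-nef if $(C\cdot E)\le0$ for all exceptional curves $E$. For an effective divisor $D$ with exceptional support, the anti-nef part $\Delta$ of its Zariski decomposition is the unique minimal effective anti-nef $\mathbb Q$-divisor with exceptional support such that $D\le\Delta$. *)

theory Defs
  imports Complex_Main
begin

text \<open>Abstract model of the exceptional locus of a resolution X of Spec R.
  Exc is the finite set of exceptional (prime) curves, M E F = (E . F) the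
  intersection numbers. Divisors with exceptional support are coefficient
  functions vanishing outside Exc (integer coefficients for divisors,
  rational ones for Q-divisors).\<close>

definition intersection_data :: "'c set \<Rightarrow> ('c \<Rightarrow> 'c \<Rightarrow> int) \<Rightarrow> bool" where
  "intersection_data Exc M \<longleftrightarrow>
     finite Exc \<and>
     (\<forall>E\<in>Exc. \<forall>F\<in>Exc. M E F = M F E) \<and>
     (\<forall>E\<in>Exc. \<forall>F\<in>Exc. E \<noteq> F \<longrightarrow> 0 \<le> M E F) \<and>
     (\<forall>x :: 'c \<Rightarrow> real. (\<exists>E\<in>Exc. x E \<noteq> 0) \<longrightarrow>
        (\<Sum>E\<in>Exc. \<Sum>F\<in>Exc. x E * x F * of_int (M E F)) < 0)"

definition exc_support :: "'c set \<Rightarrow> ('c \<Rightarrow> 'a::zero) \<Rightarrow> bool" where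
  "exc_support Exc D \<longleftrightarrow> (\<forall>E. E \<notin> Exc \<longrightarrow> D E = 0)"

definition effective :: "('c \<Rightarrow> 'a::{zero,ord}) \<Rightarrow> bool" where
  "effective D \<longleftrightarrow> (\<forall>E. 0 \<le> D E)"

definition inter_curve :: "'c set \<Rightarrow> ('c \<Rightarrow> 'c \<Rightarrow> int) \<Rightarrow> ('c \<Rightarrow> rat) \<Rightarrow> 'c \<Rightarrow> rat" where
  "inter_curve Exc M C E = (\<Sum>F\<in>Exc. C F * of_int (M F E))"

definition self_inter :: "'c set \<Rightarrow> ('c \<Rightarrow> 'c \<Rightarrow> int) \<Rightarrow> ('c \<Rightarrow> rat) \<Rightarrow> rat" where
  "self_inter Exc M C = (\<Sum>E\<in>Exc. \<Sum>F\<in>Exc. C E * C F * of_int (M E F))"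

definition anti_nef :: "'c set \<Rightarrow> ('c \<Rightarrow> 'c \<Rightarrow> int) \<Rightarrow> ('c \<Rightarrow> rat) \<Rightarrow> bool" where
  "anti_nef Exc M C \<longleftrightarrow> (\<forall>E\<in>Exc. inter_curve Exc M C E \<le> 0)"

text \<open>Delta is the anti-nef part of the Zariski decomposition of D: the unique
  minimal (= least) effective anti-nef Q-divisor with exceptional support that
  is \<ge> D.\<close>
definition antinef_part :: "'c set \<Rightarrow> ('c \<Rightarrow> 'c \<Rightarrow> int) \<Rightarrow> ('c \<Rightarrow> int) \<Rightarrow> ('c \<Rightarrow> rat) \<Rightarrow> bool" where
  "antinef_part Exc M D \<Delta> \<longleftrightarrow>
     exc_support Exc \<Delta> \<and> effective \<Delta> \<and> anti_nef Exc M \<Delta> \<and> (\<forall>E. of_int (D E) \<le> \<Delta> E) \<and>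
     (\<forall>\<Delta>'. exc_support Exc \<Delta>' \<and> effective \<Delta>' \<and> anti_nef Exc M \<Delta>' \<and> (\<forall>E. of_int (D E) \<le> \<Delta>' E)
        \<longrightarrow> (\<forall>E. \<Delta> E \<le> \<Delta>' E))"

end

theory Submission
  imports Defs
begin

definition bil :: "'c set \<Rightarrow> ('c \<Rightarrow> 'c \<Rightarrow> int) \<Rightarrow> ('c \<Rightarrow> rat) \<Rightarrow> ('c \<Rightarrow> rat) \<Rightarrow> rat" where
  "bil Exc M C D = (\<Sum>E\<in>Exc. \<Sum>F\<in>Exc. C E * D F * of_int (M E F))"

lemma self_bil: "self_inter Exc M C = bil Exc M C C"
  by (simp add: self_inter_def bil_def)

lemma bil_expand:
  "bil Exc M (\<lambda>E. A E + B E) (\<lambda>E. A E + B E) =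
   bil Exc M A A + bil Exc M A B + bil Exc M B A + bil Exc M B B"
  by (simp add: bil_def algebra_simps sum.distrib)

lemma bil_sym:
  assumes "\<forall>E\<in>Exc. \<forall>F\<in>Exc. M E F = M F E"
  shows "bil Exc M B A = bil Exc M A B"
proof -
  have "bil Exc M B A = (\<Sum>F\<in>Exc. \<Sum>E\<in>Exc. B E * A F * of_int (M E F))"
    unfolding bil_def by (rule sum.swap)
  also have "\<dots> = bil Exc M A B"
    unfolding bil_def using assms by (intro sum.cong refl) (simp add: mult.commute)
  finally show ?thesis .
qed

lemma bil_inter: "bil Exc M A B = (\<Sum>F\<in>Exc. B F * inter_curve Exc M A F)"
proof -
  have "bil Exc M A B = (\<Sum>F\<in>Exc. \<Sum>E\<in>Exc. A E * B F * of_int (M E F))"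
    unfolding bil_def by (rule sum.swap)
  also have "\<dots> = (\<Sum>F\<in>Exc. B F * inter_curve Exc M A F)"
    unfolding inter_curve_def by (simp add: sum_distrib_left algebra_simps)
  finally show ?thesis .
qed

lemma neg_def_rat:
  assumes "intersection_data Exc M"
  shows "bil Exc M B B \<le> 0" and "bil Exc M B B = 0 \<Longrightarrow> \<forall>E\<in>Exc. B E = 0"
proof -
  let ?x = "\<lambda>E. real_of_rat (B E)"
  have eq: "real_of_rat (bil Exc M B B) = (\<Sum>E\<in>Exc. \<Sum>F\<in>Exc. ?x E * ?x F * of_int (M E F))"
    unfolding bil_def by (simp add: of_rat_sum of_rat_mult)
  have nd: "(\<exists>E\<in>Exc. ?x E \<noteq> 0) \<longrightarrow> (\<Sum>E\<in>Exc. \<Sum>F\<in>Exc. ?x E * ?x F * of_int (M E F)) < 0"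
    using assms unfolding intersection_data_def by (elim conjE allE[where x="?x"])
  show "bil Exc M B B \<le> 0"
  proof (cases "\<exists>E\<in>Exc. B E \<noteq> 0")
    case True
    then have "real_of_rat (bil Exc M B B) < 0" using nd eq by simp
    then show ?thesis by (simp add: of_rat_less_0_iff)
  next
    case False
    then show ?thesis by (simp add: bil_def)
  qed
  show "bil Exc M B B = 0 \<Longrightarrow> \<forall>E\<in>Exc. B E = 0"
  proof (rule ccontr)
    assume h: "bil Exc M B B = 0" "\<not> (\<forall>E\<in>Exc. B E = 0)"
    then have "real_of_rat (bil Exc M B B) < 0" using nd eq by simp
    with h(1) show False by simp
  qed
qed

theorem corollary5p3:
  fixes Exc :: "'c set" and M :: "'c \<Rightarrow> 'c \<Rightarrow> int"
    and D1 D2 :: "'c \<Rightarrow> int" and \<Delta>1 \<Delta>2 :: "'c \<Rightarrow> rat"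
  assumes "intersection_data Exc M"
    and "exc_support Exc D1" "effective D1"
    and "exc_support Exc D2" "effective D2"
    and "\<forall>E. D1 E \<le> D2 E"
    and "antinef_part Exc M D1 \<Delta>1"
    and "antinef_part Exc M D2 \<Delta>2"
  shows "self_inter Exc M \<Delta>2 \<le> self_inter Exc M \<Delta>1
         \<and> (self_inter Exc M \<Delta>2 = self_inter Exc M \<Delta>1 \<longleftrightarrow> \<Delta>1 = \<Delta>2)"
proof -
  have sym: "\<forall>E\<in>Exc. \<forall>F\<in>Exc. M E F = M F E" using assms(1) unfolding intersection_data_def by blast
  have a1: "exc_support Exc \<Delta>1" "anti_nef Exc M \<Delta>1"
    and min1: "\<And>\<Delta>'. exc_support Exc \<Delta>' \<Longrightarrow> effective \<Delta>' \<Longrightarrow> anti_nef Exc M \<Delta>' \<Longrightarrow>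
        (\<forall>E. of_int (D1 E) \<le> \<Delta>' E) \<Longrightarrow> (\<forall>E. \<Delta>1 E \<le> \<Delta>' E)"
    using assms(7) unfolding antinef_part_def by blast+
  have a2: "exc_support Exc \<Delta>2" "effective \<Delta>2" "anti_nef Exc M \<Delta>2" "\<forall>E. of_int (D2 E) \<le> \<Delta>2 E"
    using assms(8) unfolding antinef_part_def by blast+
  have "\<forall>E. of_int (D1 E) \<le> \<Delta>2 E"
  proof
    fix E
    have "(of_int (D1 E) :: rat) \<le> of_int (D2 E)" using assms(6) by simp
    then show "of_int (D1 E) \<le> \<Delta>2 E" using a2(4) by (meson order_trans)
  qed
  then have le: "\<forall>E. \<Delta>1 E \<le> \<Delta>2 E" using min1 a2 by blast
  define B where "B = (\<lambda>E. \<Delta>2 E - \<Delta>1 E)"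
  have d2: "\<Delta>2 = (\<lambda>E. \<Delta>1 E + B E)" unfolding B_def by auto
  have cross: "bil Exc M \<Delta>1 B \<le> 0"
    unfolding bil_inter
  proof (rule sum_nonpos)
    fix F assume "F \<in> Exc"
    then have "inter_curve Exc M \<Delta>1 F \<le> 0" using a1(2) unfolding anti_nef_def by blast
    moreover have "B F \<ge> 0" using le unfolding B_def by simp
    ultimately show "B F * inter_curve Exc M \<Delta>1 F \<le> 0" by (simp add: mult_nonneg_nonpos)
  qed
  have exp: "self_inter Exc M \<Delta>2 = self_inter Exc M \<Delta>1 + 2 * bil Exc M \<Delta>1 B + bil Exc M B B"
    unfolding self_bil d2 bil_expand bil_sym[OF sym, of B \<Delta>1] by simp
  have bb: "bil Exc M B B \<le> 0" using neg_def_rat(1)[OF assms(1)] .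
  show ?thesis
  proof (intro conjI iffI)
    show "self_inter Exc M \<Delta>2 \<le> self_inter Exc M \<Delta>1" using exp cross bb by simp
  next
    assume "self_inter Exc M \<Delta>2 = self_inter Exc M \<Delta>1"
    then have "bil Exc M B B = 0" using exp cross bb by simp
    then have z: "\<forall>E\<in>Exc. B E = 0" using neg_def_rat(2)[OF assms(1)] by blast
    show "\<Delta>1 = \<Delta>2"
    proof
      fix E
      show "\<Delta>1 E = \<Delta>2 E"
      proof (cases "E \<in> Exc")
        case True then show ?thesis using z unfolding B_def by simp
      next
        case False then show ?thesis using a1(1) a2(1) unfolding exc_support_def by simp
      qed
    qed
  next
    assume "\<Delta>1 = \<Delta>2" then show "self_inter Exc M \<Delta>2 = self_inter Exc M \<Delta>1" by simp
  qed
qed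

end
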